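(* Let $n\ge1$, $k\ge2$, $\gamma=((i_1\,j_1),\dots,(i_k\,j_k))\in\Sigma_n(k)$ and $l\in\{1,\dots,k-1\}$. Then $\sigma_l\cdot\gamma\in\Sigma_n(k)$ and $P(\sigma_l\cdot\gamma)=\sigma_l\cdot P(\gamma)$. Moreover, writing $\sigma_l\cdot\gamma=((i_{\sigma_l^{-1}(1)}\,\tilde j_1),\dots,(i_{\sigma_l^{-1}(k)}\,\tilde j_k))$, one has $\bigcup_{s=1}^k\{i_s,j_s\}=\bigcup_{s=1}^k\{i_s,\tilde j_s\}$.
   Context: Let $n\ge1$. $\mathfrak S_n$ is the symmetric group on $\{1,\dots,n\}$; products are composed right to left. $\mathsf T_n$ is the set of transpositions; a transposition is always written $(i\,j)$ with $i<j$. For $\sigma\in\mathfrak S_n$, $|\sigma|=n-(\text{number of cycles of }\sigma\text{, fixed points counted})$; $\sigma_1\preccurlyeq\sigma_2$ iff $|\sigma_2|=|\sigma_1|+|\sigma_1^{-1}\sigma_2|$. $\Sigma_n(k)=\{(\tau_1,\dots,\tau_k)\in(\mathsf T_n)^k : |\tau_1\cdots\tau_k|=k,\ \tau_1\cdots\tau_k\preccurlyeq(1\,2\,\dots\,n)\}$. $P:\Sigma_n(k)\to\{1,\dots,n-1\}^k$ sends $((i_1\,j_1),\dots,(i_k\,j_k))$ to $(i_1,\dots,i_k)$. The group $\mathfrak S_k$ acts on sequences by $\pi\cdot(x_1,\dots,x_k)=(x_{\pi^{-1}(1)},\dots,x_{\pi^{-1}(k)})$. Let $\sigma_l=(l\;l+1)\in\mathfrak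 S_k$. For $(g_1,\dots,g_k)\in(\mathsf T_n)^k$ define $\beta_l\cdot(g_1,\dots,g_k)=(g_1,\dots,g_{l-1},g_{l+1},g_{l+1}^{-1}g_lg_{l+1},g_{l+2},\dots,g_k)$ and $\beta_l^{-1}\cdot(g_1,\dots,g_k)=(g_1,\dots,g_{l-1},g_lg_{l+1}g_l^{-1},g_l,g_{l+2},\dots,g_k)$. For $\gamma=((i_1\,j_1),\dots,(i_k\,j_k))\in\Sigma_n(k)$ define $\sigma_l\cdot\gamma=\gamma$ if $i_l=i_{l+1}$, $\sigma_l\cdot\gamma=\beta_l\cdot\gamma$ if $i_l<i_{l+1}$, and $\sigma_l\cdot\gamma=\beta_l^{-1}\cdot\gamma$ if $i_l>i_{l+1}$. *)

theory Defs
  imports "HOL-Combinatorics.Combinatorics"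
begin

text \<open>Permutations of {1..n} are functions nat => nat fixing everything outside {1..n}.
  Products compose right to left, i.e. (s1 s2) = s1 o s2.\<close>

definition num_cycles :: "nat \<Rightarrow> (nat \<Rightarrow> nat) \<Rightarrow> nat" where
  "num_cycles n \<sigma> = card ((\<lambda>x. orbit \<sigma> x) ` {1..n})"

definition perm_len :: "nat \<Rightarrow> (nat \<Rightarrow> nat) \<Rightarrow> nat" where
  "perm_len n \<sigma> = n - num_cycles n \<sigma>"

definition perm_prec :: "nat \<Rightarrow> (nat \<Rightarrow> nat) \<Rightarrow> (nat \<Rightarrow> nat) \<Rightarrow> bool" where
  "perm_prec n \<sigma>1 \<sigma>2 \<longleftrightarrow> perm_len n \<sigma>2 = perm_len n \<sigma>1 + perm_len n (inv \<sigma>1 \<circ> \<sigma>2)"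

definition transpositions :: "nat \<Rightarrow> (nat \<Rightarrow> nat) set" where
  "transpositions n = {transpose i j | i j. 1 \<le> i \<and> i < j \<and> j \<le> n}"

definition long_cycle :: "nat \<Rightarrow> nat \<Rightarrow> nat" where
  "long_cycle n x = (if 1 \<le> x \<and> x < n then x + 1 else if x = n then 1 else x)"

definition list_prod :: "(nat \<Rightarrow> nat) list \<Rightarrow> nat \<Rightarrow> nat" where
  "list_prod ts = foldr (\<circ>) ts id"

definition Sigma_nk :: "nat \<Rightarrow> nat \<Rightarrow> (nat \<Rightarrow> nat) list set" where
  "Sigma_nk n k = {ts. length ts = k \<and> set ts \<subseteq> transpositions n
      \<and> perm_len n (list_prod ts) = k \<and> perm_prec n (list_prod ts) (long_cycle n)}"

definition tr_i :: "(nat \<Rightarrow> nat) \<Rightarrow> nat" where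
  "tr_i t = Min {x. t x \<noteq> x}"

definition tr_j :: "(nat \<Rightarrow> nat) \<Rightarrow> nat" where
  "tr_j t = Max {x. t x \<noteq> x}"

definition P_map :: "(nat \<Rightarrow> nat) list \<Rightarrow> nat list" where
  "P_map ts = map tr_i ts"

text \<open>Action of a permutation pi of {1..k} on sequences (lists of length k, 1-indexed):
  pi . (x_1,...,x_k) = (x_{pi^-1(1)},...,x_{pi^-1(k)}). List index s-1 stores x_s.\<close>
definition perm_act :: "(nat \<Rightarrow> nat) \<Rightarrow> 'a list \<Rightarrow> 'a list" where
  "perm_act \<pi> xs = map (\<lambda>s. xs ! (inv \<pi> s - 1)) [1..<length xs + 1]"

text \<open>Hurwitz moves beta_l and beta_l^-1 (l is 1-indexed).\<close>
definition beta :: "nat \<Rightarrow> (nat \<Rightarrow> nat) list \<Rightarrow> (nat \<Rightarrow> nat) list" where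
  "beta l gs = gs[l - 1 := gs ! l, l := inv (gs ! l) \<circ> (gs ! (l - 1)) \<circ> (gs ! l)]"

definition beta_inv :: "nat \<Rightarrow> (nat \<Rightarrow> nat) list \<Rightarrow> (nat \<Rightarrow> nat) list" where
  "beta_inv l gs = gs[l - 1 := (gs ! (l - 1)) \<circ> (gs ! l) \<circ> inv (gs ! (l - 1)), l := gs ! (l - 1)]"

definition sigma_act :: "nat \<Rightarrow> (nat \<Rightarrow> nat) list \<Rightarrow> (nat \<Rightarrow> nat) list" where
  "sigma_act l \<gamma> =
     (if tr_i (\<gamma> ! (l - 1)) = tr_i (\<gamma> ! l) then \<gamma>
      else if tr_i (\<gamma> ! (l - 1)) < tr_i (\<gamma> ! l) then beta l \<gamma>
      else beta_inv l \<gamma>)"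

end

theory Submission
  imports Defs
begin


lemma conj_tr: "transpose c d \<circ> transpose a b \<circ> transpose c d = transpose (transpose c d a) (transpose c d b)"
  by (rule ext) (simp add: Transposition.transpose_def)

lemma tr_moved: "a \<noteq> b \<Longrightarrow> {x. transpose a b x \<noteq> x} = {a, b}"
  by (auto simp: Transposition.transpose_def)

lemma tr_i_tr: "a < b \<Longrightarrow> tr_i (transpose a b) = a"
  unfolding tr_i_def by (subst tr_moved) auto

lemma tr_j_tr: "a < b \<Longrightarrow> tr_j (transpose a b) = b"
  unfolding tr_j_def by (subst tr_moved) auto

lemma trans_mem: "1 \<le> a \<Longrightarrow> a < b \<Longrightarrow> b \<le> n \<Longrightarrow> transpose a b \<in> transpositions n"
  unfolding transpositions_def by blast

lemma split3: "Suc i < length ys \<Longrightarrow> ys = take i ys @ ys!i # ys!(Suc i) # drop (Suc (Suc i)) ys"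
  by (simp add: Cons_nth_drop_Suc)

lemma img_pred: "(\<lambda>s::nat. s - 1) ` {1..k} = {0..<k}"
proof (rule set_eqI)
  fix x show "x \<in> (\<lambda>s::nat. s - 1) ` {1..k} \<longleftrightarrow> x \<in> {0..<k}"
  proof
    assume "x \<in> {0..<k}" then show "x \<in> (\<lambda>s::nat. s - 1) ` {1..k}"
      by (intro image_eqI[of _ _ "Suc x"]) auto
  qed auto
qed

lemma union_conv: "length g = k \<Longrightarrow> (\<Union>s\<in>{1..k}. F (g ! (s - 1))) = (\<Union>t\<in>set g. F t)"
proof -
  assume lk: "length g = k"
  have "(\<Union>s\<in>{1..k}. F (g ! (s - 1))) = (\<Union>i\<in>(\<lambda>s. s - 1) ` {1..k}. F (g ! i))"
    by simp
  also have "\<dots> = (\<Union>i\<in>{0..<k}. F (g ! i))" by (simp only: img_pred)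
  also have "\<dots> = (\<Union>t\<in>(!) g ` {0..<k}. F t)" by simp
  also have "(!) g ` {0..<k} = set g" using lk by (simp add: nth_image)
  finally show ?thesis .
qed


lemma list_prod_append: "list_prod (xs @ ys) = list_prod xs \<circ> list_prod ys"
  by (induct xs) (auto simp: list_prod_def)

lemma list_prod_Cons: "list_prod (x # ys) = x \<circ> list_prod ys"
  by (simp add: list_prod_def)

lemma perm_act_nth: "i < length xs \<Longrightarrow> perm_act \<pi> xs ! i = xs ! (inv \<pi> (Suc i) - 1)"
  unfolding perm_act_def by (simp del: upt_Suc)

lemma perm_act_length: "length (perm_act \<pi> xs) = length xs"
  unfolding perm_act_def by (simp del: upt_Suc)

lemma assemble:
  assumes g: "\<gamma> = xs @ g1 # g2 # zs" and g': "\<gamma>' = xs @ h1 # h2 # zs"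
    and S: "\<gamma> \<in> Sigma_nk n k" and prod: "h1 \<circ> h2 = g1 \<circ> g2"
    and h1: "h1 \<in> transpositions n" and h2: "h2 \<in> transpositions n"
    and i1: "tr_i h1 = tr_i g2" and i2: "tr_i h2 = tr_i g1"
    and U: "{tr_i h1, tr_j h1} \<union> {tr_i h2, tr_j h2} = {tr_i g1, tr_j g1} \<union> {tr_i g2, tr_j g2}"
    and l: "l = Suc (length xs)"
  shows "\<gamma>' \<in> Sigma_nk n k
    \<and> P_map \<gamma>' = perm_act (transpose l (l + 1)) (P_map \<gamma>)
    \<and> (\<Union>s\<in>{1..k}. {tr_i (\<gamma> ! (s - 1)), tr_j (\<gamma> ! (s - 1))})
       = (\<Union>s\<in>{1..k}. {tr_i (\<gamma>' ! (s - 1)), tr_j (\<gamma>' ! (s - 1))})"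
proof (intro conjI)
  have lp: "list_prod \<gamma>' = list_prod \<gamma>"
    using prod by (simp add: g g' list_prod_append list_prod_Cons o_assoc[symmetric])
      (metis comp_assoc)
  have len: "length \<gamma>' = length \<gamma>" by (simp add: g g')
  have "set \<gamma>' \<subseteq> set \<gamma> \<union> {h1, h2}" by (auto simp: g g')
  then show "\<gamma>' \<in> Sigma_nk n k" using S h1 h2 lp len unfolding Sigma_nk_def by auto
  have lk: "length \<gamma> = k" using S by (simp add: Sigma_nk_def)
  define F where "F = (\<lambda>t::nat\<Rightarrow>nat. {tr_i t, tr_j t})"
  have e1: "(\<Union>t\<in>set \<gamma>. F t) = (\<Union>t\<in>set xs. F t) \<union> (F g1 \<union> F g2) \<union> (\<Union>t\<in>set zs. F t)"
    by (auto simp: g)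
  have e2: "(\<Union>t\<in>set \<gamma>'. F t) = (\<Union>t\<in>set xs. F t) \<union> (F h1 \<union> F h2) \<union> (\<Union>t\<in>set zs. F t)"
    by (auto simp: g')
  have e3: "F h1 \<union> F h2 = F g1 \<union> F g2" using U by (simp add: F_def)
  have "(\<Union>s\<in>{1..k}. F (\<gamma> ! (s - 1))) = (\<Union>s\<in>{1..k}. F (\<gamma>' ! (s - 1)))"
    using union_conv[OF lk, of F] union_conv[of \<gamma>' k F] len lk e1 e2 e3 by simp
  then show "(\<Union>s\<in>{1..k}. {tr_i (\<gamma> ! (s - 1)), tr_j (\<gamma> ! (s - 1))})
       = (\<Union>s\<in>{1..k}. {tr_i (\<gamma>' ! (s - 1)), tr_j (\<gamma>' ! (s - 1))})"
    unfolding F_def .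
  show "P_map \<gamma>' = perm_act (transpose l (l + 1)) (P_map \<gamma>)"
  proof (rule nth_equalityI)
    show "length (P_map \<gamma>') = length (perm_act (transpose l (l + 1)) (P_map \<gamma>))"
      by (simp add: P_map_def perm_act_length len)
    fix i assume "i < length (P_map \<gamma>')"
    then have i: "i < length xs + 2 + length zs" by (simp add: P_map_def g')
    have "perm_act (transpose l (l + 1)) (P_map \<gamma>) ! i
        = P_map \<gamma> ! (transpose l (l+1) (Suc i) - 1)"
      using i by (simp add: perm_act_nth P_map_def g)
    moreover have "P_map \<gamma>' ! i = P_map \<gamma> ! (transpose l (l+1) (Suc i) - 1)"
    proof -
      consider "i < length xs" | "i = length xs" | "i = Suc (length xs)" | "i > Suc (length xs)"
        by linarith
      then show ?thesis
      proof cases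
        case 1 then show ?thesis using l by (simp add: P_map_def g g' nth_append)
      next
        case 2 then show ?thesis using l i1 by (simp add: P_map_def g g' nth_append)
      next
        case 3 then show ?thesis using l i2 by (simp add: P_map_def g g' nth_append)
      next
        case 4
        then obtain m where m: "i = Suc (Suc (length xs)) + m" by (metis less_iff_Suc_add add_Suc_right add_Suc)
        show ?thesis using l i m by (simp add: P_map_def g g' nth_append)
      qed
    qed
    ultimately show "P_map \<gamma>' ! i = perm_act (transpose l (l + 1)) (P_map \<gamma>) ! i" by simp
  qed
qed


lemma conj_small:
  fixes a b c d n :: nat
  assumes "a < b" "a < c" "c < d" "b \<le> n" "d \<le> n"
  shows "\<exists>b'. transpose c d \<circ> transpose a b \<circ> transpose c d = transpose a b' \<and> a < b' \<and> b' \<le> n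
     \<and> {c, d} \<union> {a, b'} = {a, b} \<union> {c, d}"
proof -
  have "transpose c d a = a" using assms by (auto simp: Transposition.transpose_def)
  then show ?thesis using assms
    by (intro exI[of _ "transpose c d b"]) (auto simp: conj_tr Transposition.transpose_def)
qed

lemma beta_gen: "beta (Suc (length xs)) (xs @ g1 # g2 # zs) = xs @ g2 # (inv g2 \<circ> g1 \<circ> g2) # zs"
  by (simp add: beta_def list_update_append nth_append)

lemma beta_inv_gen: "beta_inv (Suc (length xs)) (xs @ g1 # g2 # zs) = xs @ (g1 \<circ> g2 \<circ> inv g1) # g1 # zs"
  by (simp add: beta_inv_def list_update_append nth_append)

lemma sigma_gen: "sigma_act (Suc (length xs)) (xs @ g1 # g2 # zs) =
   (if tr_i g1 = tr_i g2 then xs @ g1 # g2 # zs else if tr_i g1 < tr_i g2 then beta (Suc (length xs)) (xs @ g1 # g2 # zs)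
    else beta_inv (Suc (length xs)) (xs @ g1 # g2 # zs))"
  by (simp add: sigma_act_def nth_append)

lemma main_gen:
  assumes S: "xs @ g1 # g2 # zs \<in> Sigma_nk n k"
    and g1: "g1 = transpose a b" "1 \<le> a" "a < b" "b \<le> n"
    and g2: "g2 = transpose c d" "1 \<le> c" "c < d" "d \<le> n"
  shows "sigma_act (Suc (length xs)) (xs @ g1 # g2 # zs) \<in> Sigma_nk n k
    \<and> P_map (sigma_act (Suc (length xs)) (xs @ g1 # g2 # zs)) = perm_act (transpose (Suc (length xs)) (Suc (length xs) + 1)) (P_map (xs @ g1 # g2 # zs))
    \<and> (\<Union>s\<in>{1..k}. {tr_i ((xs @ g1 # g2 # zs) ! (s - 1)), tr_j ((xs @ g1 # g2 # zs) ! (s - 1))})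
       = (\<Union>s\<in>{1..k}. {tr_i (sigma_act (Suc (length xs)) (xs @ g1 # g2 # zs) ! (s - 1)), tr_j (sigma_act (Suc (length xs)) (xs @ g1 # g2 # zs) ! (s - 1))})"
proof -
  have ti1: "tr_i g1 = a" "tr_j g1 = b" using g1 by (simp_all add: tr_i_tr tr_j_tr)
  have ti2: "tr_i g2 = c" "tr_j g2 = d" using g2 by (simp_all add: tr_i_tr tr_j_tr)
  have m1: "g1 \<in> transpositions n" using g1 trans_mem by simp
  have m2: "g2 \<in> transpositions n" using g2 trans_mem by simp
  consider "a = c" | "a < c" | "c < a" by linarith
  then show ?thesis
  proof cases
    case 1
    then have e: "sigma_act (Suc (length xs)) (xs @ g1 # g2 # zs) = xs @ g1 # g2 # zs"
      using ti1 ti2 by (simp add: sigma_gen)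
    show ?thesis unfolding e
      by (rule assemble[OF refl refl S refl m1 m2]) (use 1 ti1 ti2 in auto)
  next
    case 2
    obtain b' where b': "transpose c d \<circ> transpose a b \<circ> transpose c d = transpose a b'" "a < b'" "b' \<le> n"
      "{c, d} \<union> {a, b'} = {a, b} \<union> {c, d}"
      using conj_small[OF g1(3) 2 g2(3) g1(4) g2(4)] by blast
    have e: "sigma_act (Suc (length xs)) (xs @ g1 # g2 # zs) = xs @ g2 # transpose a b' # zs"
      using ti1 ti2 2 b'(1) by (simp add: sigma_gen beta_gen g1 g2)
    have pr: "g2 \<circ> transpose a b' = g1 \<circ> g2"
      unfolding b'(1)[symmetric] g1 g2 by (simp add: comp_assoc[symmetric])
    show ?thesis unfolding e
      apply (rule assemble[OF refl refl S pr m2 trans_mem])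
      using g1 b' ti1 ti2 by (auto simp: tr_i_tr tr_j_tr)
  next
    case 3
    obtain d' where d': "transpose a b \<circ> transpose c d \<circ> transpose a b = transpose c d'" "c < d'" "d' \<le> n"
      "{a, b} \<union> {c, d'} = {c, d} \<union> {a, b}"
      using conj_small[OF g2(3) 3 g1(3) g2(4) g1(4)] by blast
    have e: "sigma_act (Suc (length xs)) (xs @ g1 # g2 # zs) = xs @ transpose c d' # g1 # zs"
      using ti1 ti2 3 d'(1) by (simp add: sigma_gen beta_inv_gen g1 g2)
    have pr: "transpose c d' \<circ> g1 = g1 \<circ> g2"
      unfolding d'(1)[symmetric] g1 g2 by (simp add: comp_assoc)
    show ?thesis unfolding e
      apply (rule assemble[OF refl refl S pr trans_mem m1])
      using g2 d' ti1 ti2 by (auto simp: tr_i_tr tr_j_tr)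
  qed
qed


theorem lemma4p1:
  fixes n k l :: nat and \<gamma> :: "(nat \<Rightarrow> nat) list"
  assumes "n \<ge> 1" and "k \<ge> 2" and "\<gamma> \<in> Sigma_nk n k" and "1 \<le> l" and "l \<le> k - 1"
  shows "sigma_act l \<gamma> \<in> Sigma_nk n k
    \<and> P_map (sigma_act l \<gamma>) = perm_act (transpose l (l + 1)) (P_map \<gamma>)
    \<and> (\<Union>s\<in>{1..k}. {tr_i (\<gamma> ! (s - 1)), tr_j (\<gamma> ! (s - 1))})
       = (\<Union>s\<in>{1..k}. {tr_i (sigma_act l \<gamma> ! (s - 1)), tr_j (sigma_act l \<gamma> ! (s - 1))})"
proof -
  have len: "length \<gamma> = k" and sub: "set \<gamma> \<subseteq> transpositions n"
    using assms(3) by (auto simp: Sigma_nk_def)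
  have lt: "Suc (l - 1) < length \<gamma>" using assms len by linarith
  have sl: "Suc (l - 1) = l" using assms by linarith
  obtain g1 g2 where g12: "g1 = \<gamma> ! (l - 1)" "g2 = \<gamma> ! l" by blast
  define xs where "xs = take (l - 1) \<gamma>"
  define zs where "zs = drop (Suc (Suc (l - 1))) \<gamma>"
  have ge: "\<gamma> = xs @ g1 # g2 # zs"
    using split3[OF lt] unfolding xs_def zs_def g12 sl .
  have lx: "l = Suc (length xs)" using lt sl by (simp add: xs_def)
  have "g1 \<in> transpositions n" using sub lt g12 by (simp add: subset_iff)
  then obtain a b where ab: "g1 = transpose a b" "1 \<le> a" "a < b" "b \<le> n"
    unfolding transpositions_def by blast
  have "g2 \<in> transpositions n" using sub lt g12 sl by (metis nth_mem subsetD)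
  then obtain c d where cd: "g2 = transpose c d" "1 \<le> c" "c < d" "d \<le> n"
    unfolding transpositions_def by blast
  have S: "xs @ g1 # g2 # zs \<in> Sigma_nk n k" using assms(3) ge by simp
  show ?thesis
    unfolding lx ge
    using main_gen[OF S ab cd] by simp
qed

end
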